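(* Every positive stochastic choice function on a finite set $X$ is an unrestricted cross-nested logit.
   Context: $X$ is a finite set, $\mathscr{A}$ the nonempty subsets; a stochastic choice function is $p:X\times\mathscr{A}\to[0,1]$ with $\sum_{a\in A}p(a,A)=1$, $p(x,A)=0$ for $x\notin A$, and (positivity) $p(a,A)>0$ for $a\in A$. $p$ is an unrestricted generalized nested logit if there exist a collection of subsets $X_1,\dots,X_K$ of $X$ (not necessarily disjoint), numbers $\alpha^k_x\ge 0$ ($k\le K$, $x\in X$) with $\sum_{k=1}^K\alpha^k_x=1$ for each $x$ and $\alpha^k_x=0$ iff $x\notin X_k$, a function $u:X\to\mathbb{R}_{++}$ and parameters $\lambda_1,\dots,\lambda_K>0$ such that for every $A\in\mathscr{A}$ and $x\in A$, $p(x,A)=\sum_{k:\,x\in A\cap X_k}\frac{(\alpha^k_x u(x))^{1/\lambda_k}}{\sum_{y\in A\cap X_k}(\alpha^k_y u(y))^{1/\lambda_k}}\cdot\frac{\Big(\sum_{y\in A\cap X_k}(\alpha^k_y u(y))^{1/\lambda_k}\Big)^{\lambda_k}}{\sum_{l:\,A\cap X_l\ne\emptyset}\Big(\sum_{z\in A\cap X_l}(\alpha^l_z u(z))^{1/\lambda_l}\Big)^{\lambda_l}}$. It is an unrestricted cross-nested logit if moreover $\lambda_k=\lambda_{k'}$ for all $k,k'\le K$. *)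

theory Defs
  imports Complex_Main
begin

definition stoch_choice :: "'a set \<Rightarrow> ('a \<Rightarrow> 'a set \<Rightarrow> real) \<Rightarrow> bool" where
  "stoch_choice X p \<longleftrightarrow>
     (\<forall>A. A \<subseteq> X \<and> A \<noteq> {} \<longrightarrow>
        (\<forall>x\<in>X. 0 \<le> p x A \<and> p x A \<le> 1) \<and>
        (\<Sum>a\<in>A. p a A) = 1 \<and>
        (\<forall>x\<in>X. x \<notin> A \<longrightarrow> p x A = 0))"

definition positive_choice :: "'a set \<Rightarrow> ('a \<Rightarrow> 'a set \<Rightarrow> real) \<Rightarrow> bool" where
  "positive_choice X p \<longleftrightarrow> (\<forall>A. A \<subseteq> X \<and> A \<noteq> {} \<longrightarrow> (\<forall>a\<in>A. p a A > 0))"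

text \<open>Nests are indexed by k < K (i.e. k = 0..K-1 instead of 1..K).\<close>
definition gnl_prob ::
  "nat \<Rightarrow> (nat \<Rightarrow> 'a set) \<Rightarrow> (nat \<Rightarrow> 'a \<Rightarrow> real) \<Rightarrow> ('a \<Rightarrow> real) \<Rightarrow> (nat \<Rightarrow> real)
     \<Rightarrow> 'a \<Rightarrow> 'a set \<Rightarrow> real" where
  "gnl_prob K N \<alpha> u lam x A =
     (let w = (\<lambda>k y. (\<alpha> k y * u y) powr (1 / lam k));
          S = (\<lambda>k. \<Sum>y\<in>A \<inter> N k. w k y);
          D = (\<Sum>l\<in>{l. l < K \<and> A \<inter> N l \<noteq> {}}. S l powr lam l)
      in \<Sum>k\<in>{k. k < K \<and> x \<in> A \<inter> N k}. (w k x / S k) * (S k powr lam k / D))"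

definition unrestricted_gnl :: "'a set \<Rightarrow> ('a \<Rightarrow> 'a set \<Rightarrow> real) \<Rightarrow> bool" where
  "unrestricted_gnl X p \<longleftrightarrow>
     (\<exists>(K::nat) (N::nat \<Rightarrow> 'a set) (\<alpha>::nat \<Rightarrow> 'a \<Rightarrow> real) (u::'a \<Rightarrow> real) (lam::nat \<Rightarrow> real).
        (\<forall>k<K. N k \<subseteq> X) \<and>
        (\<forall>k<K. \<forall>x\<in>X. \<alpha> k x \<ge> 0 \<and> (\<alpha> k x = 0 \<longleftrightarrow> x \<notin> N k)) \<and>
        (\<forall>x\<in>X. (\<Sum>k<K. \<alpha> k x) = 1) \<and>
        (\<forall>x\<in>X. u x > 0) \<and>
        (\<forall>k<K. lam k > 0) \<and>
        (\<forall>A. A \<subseteq> X \<and> A \<noteq> {} \<longrightarrow> (\<forall>x\<in>A. p x A = gnl_prob K N \<alpha> u lam x A)))"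

definition unrestricted_cnl :: "'a set \<Rightarrow> ('a \<Rightarrow> 'a set \<Rightarrow> real) \<Rightarrow> bool" where
  "unrestricted_cnl X p \<longleftrightarrow>
     (\<exists>(K::nat) (N::nat \<Rightarrow> 'a set) (\<alpha>::nat \<Rightarrow> 'a \<Rightarrow> real) (u::'a \<Rightarrow> real) (lam::nat \<Rightarrow> real).
        (\<forall>k<K. N k \<subseteq> X) \<and>
        (\<forall>k<K. \<forall>x\<in>X. \<alpha> k x \<ge> 0 \<and> (\<alpha> k x = 0 \<longleftrightarrow> x \<notin> N k)) \<and>
        (\<forall>x\<in>X. (\<Sum>k<K. \<alpha> k x) = 1) \<and>
        (\<forall>x\<in>X. u x > 0) \<and>
        (\<forall>k<K. lam k > 0) \<and>
        (\<forall>k<K. \<forall>k'<K. lam k = lam k') \<and>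
        (\<forall>A. A \<subseteq> X \<and> A \<noteq> {} \<longrightarrow> (\<forall>x\<in>A. p x A = gnl_prob K N \<alpha> u lam x A)))"

end

theory Submission
  imports Defs
begin


lemma contraction_fix:
  fixes I :: "'i set" and T :: "'i \<Rightarrow> 'i \<Rightarrow> real" and b :: "'i \<Rightarrow> real"
  assumes fin: "finite I" and r0: "0 \<le> \<rho>" and r1: "\<rho> < 1"
    and rows: "\<And>i. i \<in> I \<Longrightarrow> (\<Sum>j\<in>I. \<bar>T i j\<bar>) \<le> \<rho>"
    and bb: "\<And>i. i \<in> I \<Longrightarrow> \<bar>b i\<bar> \<le> B"
    and B0: "0 \<le> B"
  shows "\<exists>g. (\<forall>i\<in>I. g i = b i + (\<Sum>j\<in>I. T i j * g j)) \<and> (\<forall>i\<in>I. \<bar>g i\<bar> \<le> B / (1 - \<rho>))"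
proof -
  define F where "F g = (\<lambda>i. b i + (\<Sum>j\<in>I. T i j * g j))" for g :: "'i \<Rightarrow> real"
  define it where "it n = (F ^^ n) (\<lambda>_. 0)" for n
  have it_Suc: "it (Suc n) = F (it n)" for n by (simp add: it_def)
  have it0: "it 0 = (\<lambda>_. 0)" by (simp add: it_def)
  have key: "\<bar>\<Sum>j\<in>I. T i j * g j\<bar> \<le> \<rho> * K" if "i\<in>I" "\<forall>j\<in>I. \<bar>g j\<bar> \<le> K" "0 \<le> K" for i g K
  proof -
    have "\<bar>\<Sum>j\<in>I. T i j * g j\<bar> \<le> (\<Sum>j\<in>I. \<bar>T i j\<bar> * K)"
      using that(2) by (intro order_trans[OF sum_abs] sum_mono) (simp add: abs_mult mult_left_mono)
    also have "\<dots> = (\<Sum>j\<in>I. \<bar>T i j\<bar>) * K" by (simp add: sum_distrib_right)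
    also have "\<dots> \<le> \<rho> * K" using rows[OF that(1)] that(3) by (simp add: mult_right_mono)
    finally show ?thesis .
  qed
  have C0: "0 \<le> B / (1 - \<rho>)" using B0 r1 by simp
  have bound1: "\<forall>i\<in>I. \<bar>it n i\<bar> \<le> B / (1 - \<rho>)" for n
  proof (induction n)
    case 0 then show ?case using C0 by (simp add: it0)
  next
    case (Suc n)
    show ?case
    proof
      fix i assume i: "i \<in> I"
      have "\<bar>it (Suc n) i\<bar> \<le> \<bar>b i\<bar> + \<bar>\<Sum>j\<in>I. T i j * it n j\<bar>"
        by (simp add: it_Suc F_def abs_triangle_ineq)
      also have "\<dots> \<le> B + \<rho> * (B / (1 - \<rho>))"
        using bb[OF i] key[OF i Suc C0] by linarith
      also have "\<dots> = B / (1 - \<rho>)" using r1 by (simp add: field_simps)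
      finally show "\<bar>it (Suc n) i\<bar> \<le> B / (1 - \<rho>)" .
    qed
  qed
  have bound2: "\<forall>i\<in>I. \<bar>it (Suc n) i - it n i\<bar> \<le> \<rho> ^ n * B" for n
  proof (induction n)
    case 0 then show ?case using bb by (simp add: it_Suc it0 F_def)
  next
    case (Suc n)
    show ?case
    proof
      fix i assume i: "i \<in> I"
      have "it (Suc (Suc n)) i - it (Suc n) i = (\<Sum>j\<in>I. T i j * (it (Suc n) j - it n j))"
        by (simp add: it_Suc[of "Suc n"] it_Suc[of n] F_def sum_subtractf[symmetric] right_diff_distrib)
      also have "\<bar>\<dots>\<bar> \<le> \<rho> * (\<rho> ^ n * B)"
        by (rule key[OF i Suc]) (use r0 B0 in simp)
      finally show "\<bar>it (Suc (Suc n)) i - it (Suc n) i\<bar> \<le> \<rho> ^ Suc n * B" by simp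
    qed
  qed
  define g where "g i = suminf (\<lambda>m. it (Suc m) i - it m i)" for i
  have lim: "(\<lambda>n. it n i) \<longlonglongrightarrow> g i" if i: "i \<in> I" for i
  proof -
    have sm: "summable (\<lambda>m. it (Suc m) i - it m i)"
    proof (rule summable_comparison_test)
      show "\<exists>N. \<forall>n\<ge>N. norm (it (Suc n) i - it n i) \<le> \<rho> ^ n * B"
        using bound2 i by auto
      show "summable (\<lambda>n. \<rho> ^ n * B)"
        using r0 r1 by (intro summable_mult2 summable_geometric) simp
    qed
    have "(\<lambda>n. \<Sum>m<n. it (Suc m) i - it m i) \<longlonglongrightarrow> g i"
      unfolding g_def by (rule summable_LIMSEQ[OF sm])
    moreover have "(\<Sum>m<n. it (Suc m) i - it m i) = it n i" for n
      using sum_lessThan_telescope[of "\<lambda>m. it m i" n] by (simp add: it0)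
    ultimately show ?thesis by simp
  qed
  have fix_eq: "g i = b i + (\<Sum>j\<in>I. T i j * g j)" if i: "i \<in> I" for i
  proof -
    have "(\<lambda>n. it (Suc n) i) \<longlonglongrightarrow> g i" using lim[OF i] by (rule LIMSEQ_Suc)
    moreover have "(\<lambda>n. it (Suc n) i) \<longlonglongrightarrow> b i + (\<Sum>j\<in>I. T i j * g j)"
      unfolding it_Suc F_def
      by (intro tendsto_intros lim) 
    ultimately show ?thesis by (rule LIMSEQ_unique)
  qed
  have gb: "\<bar>g i\<bar> \<le> B / (1 - \<rho>)" if i: "i \<in> I" for i
  proof (rule LIMSEQ_le_const2)
    show "(\<lambda>n. \<bar>it n i\<bar>) \<longlonglongrightarrow> \<bar>g i\<bar>" by (intro tendsto_intros lim i)
    show "\<exists>N. \<forall>n\<ge>N. \<bar>it n i\<bar> \<le> B / (1 - \<rho>)" using bound1 i by auto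
  qed
  show ?thesis using fix_eq gb by blast
qed



definition wt :: "real \<Rightarrow> 'a set \<times> 'a \<Rightarrow> 'a \<Rightarrow> real" where
  "wt t i y = (if y \<in> fst i then (if y = snd i then 1 + t else 1) else 0)"

definition WW :: "real \<Rightarrow> 'a set \<times> 'a \<Rightarrow> 'a set \<Rightarrow> real" where
  "WW t i A = (\<Sum>y\<in>A. wt t i y)"

lemma wt_nonneg: "0 \<le> t \<Longrightarrow> 0 \<le> wt t i y"
  by (simp add: wt_def)

lemma WW_nonneg: "0 \<le> t \<Longrightarrow> 0 \<le> WW t i A"
  by (simp add: WW_def sum_nonneg wt_nonneg)

lemma sum_wt_own:
  assumes "finite C" "z \<in> C"
  shows "(\<Sum>y\<in>C. wt t (C, z) y) = real (card C) + t"
proof -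
  have "(\<Sum>y\<in>C. wt t (C, z) y) = (\<Sum>y\<in>C. 1 + (if y = z then t else 0))"
    by (intro sum.cong) (auto simp: wt_def)
  also have "\<dots> = real (card C) + t" using assms by (simp add: sum.distrib)
  finally show ?thesis .
qed

lemma WW_restrict:
  assumes "finite A"
  shows "WW t (C, z) A = (\<Sum>y\<in>A \<inter> C. wt t (C, z) y)"
proof -
  have "WW t (C, z) A = (\<Sum>y\<in>A. if y \<in> C then wt t (C, z) y else 0)"
    unfolding WW_def by (intro sum.cong) (auto simp: wt_def)
  also have "\<dots> = (\<Sum>y\<in>A \<inter> C. wt t (C, z) y)"
    using assms by (simp add: sum.If_cases Int_def)
  finally show ?thesis .
qed

lemma WW_sub:
  assumes "finite A" "C \<subseteq> A" "z \<in> C"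
  shows "WW t (C, z) A = real (card C) + t"
proof -
  have "A \<inter> C = C" using assms by auto
  then show ?thesis using WW_restrict[OF assms(1)] sum_wt_own[of C z t] assms
    by (metis finite_subset)
qed

lemma WW_notsub:
  assumes "finite A" "finite C" "\<not> C \<subseteq> A" "z \<in> C" "0 \<le> t"
  shows "WW t (C, z) A \<le> real (card C) + t - 1"
proof -
  obtain y0 where y0: "y0 \<in> C" "y0 \<notin> A" using assms by auto
  have "WW t (C, z) A = (\<Sum>y\<in>A \<inter> C. wt t (C, z) y)" by (rule WW_restrict[OF assms(1)])
  also have "\<dots> \<le> (\<Sum>y\<in>C - {y0}. wt t (C, z) y)"
    using assms y0 by (intro sum_mono2) (auto simp: wt_nonneg)
  also have "\<dots> = (\<Sum>y\<in>C. wt t (C, z) y) - wt t (C, z) y0"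
    using assms y0 by (simp add: sum_diff1)
  also have "\<dots> \<le> real (card C) + t - 1"
    using sum_wt_own[OF assms(2,4)] y0 assms(5) by (simp add: wt_def)
  finally show ?thesis .
qed



lemma solve:
  fixes X :: "'a set" and p :: "'a \<Rightarrow> 'a set \<Rightarrow> real"
  assumes finX: "finite X" and ne: "X \<noteq> {}" and dpos: "0 < \<delta>" and dle: "\<delta> \<le> 1"
    and pb: "\<And>A x. A \<subseteq> X \<Longrightarrow> A \<noteq> {} \<Longrightarrow> x \<in> A \<Longrightarrow> \<delta> \<le> p x A \<and> p x A \<le> 1"
  defines "I \<equiv> (SIGMA A:{A. A \<subseteq> X \<and> A \<noteq> {}}. A)"
  shows "\<exists>t e \<beta> c. 0 < t \<and> (\<forall>j\<in>I. 0 < \<beta> j) \<and> (\<forall>A. 0 < c A)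
     \<and> (\<forall>A x. A \<subseteq> X \<and> A \<noteq> {} \<and> x \<in> A \<longrightarrow>
            (\<Sum>j\<in>I. \<beta> j * wt t j x * WW t j A ^ e) = c A * p x A)"
proof -
  define Mn where "Mn = {A. A \<subseteq> X \<and> A \<noteq> {}}"
  have I_def': "I = (SIGMA A:Mn. A)" by (simp add: I_def Mn_def)
  have finMn: "finite Mn" unfolding Mn_def using finX by (rule rev_finite_subset[OF finite_Pow_iff[THEN iffD2]]) auto
  have finI: "finite I" unfolding I_def' using finMn finX Mn_def
    by (intro finite_SigmaI) (auto intro: finite_subset)
  have memI: "j \<in> I \<longleftrightarrow> fst j \<subseteq> X \<and> fst j \<noteq> {} \<and> snd j \<in> fst j" for j
    by (cases j) (simp add: I_def)
  obtain x0 where x0: "x0 \<in> X" using ne by auto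
  have "({x0}, x0) \<in> I" using x0 by (simp add: memI)
  then have NIpos: "0 < card I" using finI card_gt_0_iff by blast
  define n where "n = real (card X)"
  have n1: "1 \<le> n" using finX ne by (simp add: n_def Suc_le_eq card_gt_0_iff)
  define \<rho> where "\<rho> = \<delta> / 4"
  define t where "t = 2 * n / \<rho>"
  define NI where "NI = real (card I)"
  have NI1: "1 \<le> NI" using NIpos by (simp add: NI_def)
  define M where "M = 4 * NI / \<rho> + 1"
  define \<theta> where "\<theta> = 1 - 1 / (n + t)"
  have rpos: "0 < \<rho>" using dpos by (simp add: \<rho>_def)
  have rle: "\<rho> \<le> 1/4" using dle by (simp add: \<rho>_def)
  have tpos: "0 < t" using rpos n1 by (simp add: t_def)
  have t1: "1 \<le> t"
  proof -
    have "2 * n / \<rho> \<ge> 2 * n / (1/4)" using rpos rle n1 by (intro divide_left_mono) auto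
    then show ?thesis using n1 by (simp add: t_def)
  qed
  have Mge: "4 * NI \<le> \<rho> * M" using rpos by (simp add: M_def field_simps)
  have M1: "1 \<le> M" using rpos NI1 by (simp add: M_def)
  have th0: "0 \<le> \<theta>" using n1 tpos by (simp add: \<theta>_def field_simps)
  have th1: "\<theta> < 1" using n1 tpos by (simp add: \<theta>_def)
  have "0 < \<rho> / (4 * NI * M ^ card X)" using rpos NI1 M1 by simp
  then obtain e where e: "\<theta> ^ e < \<rho> / (4 * NI * M ^ card X)"
    using real_arch_pow_inv[OF _ th1] by blast
  define c where "c A = M ^ card A" for A :: "'a set"
  define m where "m C = real (card C) + t" for C :: "'a set"
  define T where "T i j = (if fst j = fst i then - 1 / t
      else - (c (fst j) * wt t j (snd i) * WW t j (fst i) ^ e) / (c (fst i) * t * m (fst j) ^ e))"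
    for i j :: "'a set \<times> 'a"
  define b where "b i = p (snd i) (fst i)" for i :: "'a set \<times> 'a"
  have cpos: "0 < c A" for A using M1 by (simp add: c_def)
  have mpos: "0 < m C" for C using tpos by (simp add: m_def add_nonneg_pos)
  have term_bd: "\<bar>T i j\<bar> \<le> (if fst j = fst i then 1 / t else 0) + \<rho> / (2 * NI)"
    if i: "i \<in> I" and j: "j \<in> I" for i j
  proof (cases "fst j = fst i")
    case True then show ?thesis using tpos rpos NI1 by (simp add: T_def)
  next
    case False
    define A where "A = fst i"
    define C where "C = fst j"
    define x where "x = snd i"
    define z where "z = snd j"
    have jj: "j = (C, z)" by (simp add: C_def z_def)
    have CX: "C \<subseteq> X" "z \<in> C" "C \<noteq> {}" using j by (auto simp: memI C_def z_def)
    have AX: "A \<subseteq> X" "x \<in> A" "A \<noteq> {}" using i by (auto simp: memI A_def x_def)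
    have finA: "finite A" and finC: "finite C" using AX CX finX finite_subset by auto
    have CA: "C \<noteq> A" using False by (simp add: A_def C_def)
    have mC0: "0 < m C" by (rule mpos)
    have wle: "wt t j x \<le> 2 * t" using t1 by (simp add: wt_def)
    have w0: "0 \<le> wt t j x" using tpos by (simp add: wt_nonneg)
    have W0: "0 \<le> WW t j A" using tpos by (simp add: WW_nonneg)
    have Tj: "\<bar>T i j\<bar> = (wt t j x / t) * ((c C / c A) * (WW t j A / m C) ^ e)"
    proof -
      have a1: "\<bar>c C\<bar> = c C" "\<bar>c A\<bar> = c A" "\<bar>m C ^ e\<bar> = m C ^ e"
        using cpos[of C] cpos[of A] mpos[of C] by auto
      show ?thesis
      using False cpos mpos tpos w0 W0 a1
      by (simp add: T_def A_def[symmetric] C_def[symmetric] x_def[symmetric] power_divide abs_div abs_mult ac_simps)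
    qed
    have key: "(c C / c A) * (WW t j A / m C) ^ e \<le> \<rho> / (4 * NI)"
    proof (cases "C \<subseteq> A")
      case True
      have WC: "WW t j A = m C" unfolding jj m_def by (rule WW_sub[OF finA True CX(2)])
      have "card C < card A" using True CA finA psubset_card_mono by blast
      then have "M ^ card A \<ge> M ^ (card C + 1)" using M1 by (intro power_increasing) auto
      then have "c A \<ge> M * c C" by (simp add: c_def mult.commute)
      then have "c C / c A \<le> 1 / M" using cpos M1 by (simp add: field_simps)
      also have "\<dots> \<le> \<rho> / (4 * NI)" using Mge M1 NI1 rpos by (simp add: field_simps)
      finally show ?thesis using WC mpos[of C] by simp
    next
      case False
      have Wle: "WW t j A \<le> m C - 1" unfolding jj m_def
        using WW_notsub[OF finA finC False CX(2)] tpos by simp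
      have mC: "m C \<le> n + t" using card_mono[OF finX CX(1)] by (simp add: m_def n_def)
      have "WW t j A / m C \<le> 1 - 1 / m C" using Wle mC0 by (simp add: field_simps)
      also have "\<dots> \<le> \<theta>"
      proof -
        have "1 / (n + t) \<le> 1 / m C" using mC mC0 by (intro divide_left_mono) auto
        then show ?thesis by (simp add: \<theta>_def)
      qed
      finally have r1: "(WW t j A / m C) ^ e \<le> \<theta> ^ e"
        using W0 mC0 by (intro power_mono) auto
      have "c C \<le> M ^ card X" unfolding c_def using M1 card_mono[OF finX CX(1)]
        by (intro power_increasing) auto
      moreover have "1 \<le> c A" using M1 by (simp add: c_def)
      ultimately have r2: "c C / c A \<le> M ^ card X" using cpos
      proof -
        have "c C / c A \<le> c C / 1" using \<open>1 \<le> c A\<close> cpos[of C] by (intro divide_left_mono) auto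
        then show ?thesis using \<open>c C \<le> M ^ card X\<close> by simp
      qed
      have "(c C / c A) * (WW t j A / m C) ^ e \<le> M ^ card X * \<theta> ^ e"
        using r1 r2 cpos W0 mC0 M1 by (intro mult_mono) auto
      also have "\<dots> \<le> M ^ card X * (\<rho> / (4 * NI * M ^ card X))"
        using e M1 by (intro mult_left_mono) auto
      also have "\<dots> = \<rho> / (4 * NI)" using M1 by simp
      finally show ?thesis .
    qed
    have k0: "0 \<le> (c C / c A) * (WW t j A / m C) ^ e"
      using cpos[of C] cpos[of A] W0 mC0 by simp
    have w2: "wt t j x / t \<le> 2" using wle tpos by (simp add: divide_le_eq)
    have "\<bar>T i j\<bar> \<le> 2 * (\<rho> / (4 * NI))"
      unfolding Tj using w2 key k0 by (intro mult_mono) auto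
    then show ?thesis using False by simp
  qed
  have row: "(\<Sum>j\<in>I. \<bar>T i j\<bar>) \<le> \<rho>" if i: "i \<in> I" for i
  proof -
    define A where "A = fst i"
    have AX: "A \<subseteq> X" "A \<noteq> {}" using i by (auto simp: memI A_def)
    have setA: "{j\<in>I. fst j = A} = Pair A ` A" using AX by (auto simp: memI)
    have cardA: "card {j\<in>I. fst j = A} = card A" unfolding setA
      by (rule card_image) (simp add: inj_on_def)
    have "(\<Sum>j\<in>I. \<bar>T i j\<bar>) \<le> (\<Sum>j\<in>I. (if fst j = A then 1 / t else 0) + \<rho> / (2 * NI))"
      using term_bd[OF i] by (intro sum_mono) (simp add: A_def)
    also have "\<dots> = (\<Sum>j\<in>I. (if fst j = A then 1 / t else 0)) + NI * (\<rho> / (2 * NI))"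
      by (simp add: sum.distrib NI_def)
    also have "(\<Sum>j\<in>I. (if fst j = A then 1 / t else 0)) = real (card A) * (1 / t)"
      using sum.inter_filter[OF finI, of "\<lambda>_. 1 / t" "\<lambda>j. fst j = A", symmetric] cardA by simp
    also have "real (card A) * (1 / t) \<le> n * (1 / t)"
      using card_mono[OF finX AX(1)] tpos by (intro mult_right_mono) (auto simp: n_def)
    also have "n * (1 / t) = \<rho> / 2" using n1 rpos by (simp add: t_def)
    also have "NI * (\<rho> / (2 * NI)) = \<rho> / 2" using NI1 by simp
    finally show ?thesis by simp
  qed
  have bb: "\<bar>b i\<bar> \<le> 1" if i: "i \<in> I" for i
    using pb[of "fst i" "snd i"] i dpos by (auto simp: memI b_def)
  obtain \<gamma> where \<gamma>eq: "\<forall>i\<in>I. \<gamma> i = b i + (\<Sum>j\<in>I. T i j * \<gamma> j)"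
    and \<gamma>bd: "\<forall>i\<in>I. \<bar>\<gamma> i\<bar> \<le> 1 / (1 - \<rho>)"
    using contraction_fix[where I=I and \<rho>=\<rho> and T=T and b=b and B=1, OF finI _ _ row bb] rpos rle by auto
  have \<gamma>pos: "0 < \<gamma> i" if i: "i \<in> I" for i
  proof -
    have "\<bar>\<Sum>j\<in>I. T i j * \<gamma> j\<bar> \<le> (\<Sum>j\<in>I. \<bar>T i j\<bar> * (1 / (1 - \<rho>)))"
    proof (intro order_trans[OF sum_abs] sum_mono)
      fix j assume "j \<in> I"
      then show "\<bar>T i j * \<gamma> j\<bar> \<le> \<bar>T i j\<bar> * (1 / (1 - \<rho>))"
        unfolding abs_mult using \<gamma>bd by (intro mult_left_mono) auto
    qed
    also have "\<dots> = (\<Sum>j\<in>I. \<bar>T i j\<bar>) * (1 / (1 - \<rho>))" by (rule sum_distrib_right[symmetric])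
    also have "\<dots> \<le> \<rho> * (1 / (1 - \<rho>))" using row[OF i] rle by (intro mult_right_mono) auto
    also have "\<dots> \<le> \<rho> * 2" using rpos rle by (intro mult_left_mono) (auto simp: field_simps)
    finally have "\<bar>\<Sum>j\<in>I. T i j * \<gamma> j\<bar> \<le> \<delta> / 2" by (simp add: \<rho>_def)
    moreover have "\<delta> \<le> b i" using pb[of "fst i" "snd i"] i by (auto simp: memI b_def)
    ultimately show ?thesis using \<gamma>eq i dpos by force
  qed
  define \<beta> where "\<beta> j = c (fst j) * \<gamma> j / (t * m (fst j) ^ e)" for j
  have \<beta>pos: "0 < \<beta> j" if "j \<in> I" for j
    using \<gamma>pos[OF that] cpos[of "fst j"] mpos[of "fst j"] tpos by (simp add: \<beta>_def)
  have ident: "(\<Sum>j\<in>I. \<beta> j * wt t j x * WW t j A ^ e) = c A * p x A"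
    if AX: "A \<subseteq> X" "A \<noteq> {}" "x \<in> A" for A x
  proof -
    define i where "i = (A, x)"
    have i: "i \<in> I" using AX by (simp add: memI i_def)
    have finA: "finite A" using AX finX finite_subset by auto
    have tm: "\<beta> j * wt t j x * WW t j A ^ e = - c A * T i j * \<gamma> j + (if j = i then c A * \<gamma> i else 0)"
      if j: "j \<in> I" for j
    proof (cases "fst j = A")
      case True
      obtain z where jz: "j = (A, z)" "z \<in> A" using True j by (cases j) (auto simp: memI)
      have W: "WW t (A, z) A = m A" unfolding m_def by (rule WW_sub[OF finA order_refl jz(2)])
      have me: "m A ^ e \<noteq> 0" using mpos[of A] by simp
      have wx: "wt t (A, z) x = 1 + (if z = x then t else 0)" using AX jz by (simp add: wt_def)
      have "\<beta> j * wt t j x * WW t j A ^ e = c A * \<gamma> j * (1 + (if z = x then t else 0)) / t"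
        using me tpos by (simp add: \<beta>_def W jz wx)
      then show ?thesis using tpos by (auto simp: T_def i_def jz field_simps)
    next
      case False
      then have "j \<noteq> i" by (auto simp: i_def)
      then show ?thesis using False cpos[of A] tpos mpos[of "fst j"]
        by (simp add: T_def i_def \<beta>_def field_simps)
    qed
    have "(\<Sum>j\<in>I. \<beta> j * wt t j x * WW t j A ^ e)
        = (\<Sum>j\<in>I. - c A * T i j * \<gamma> j + (if j = i then c A * \<gamma> i else 0))"
      using tm by (rule sum.cong[OF refl])
    also have "\<dots> = - c A * (\<Sum>j\<in>I. T i j * \<gamma> j) + c A * \<gamma> i"
      using i finI by (simp add: sum.distrib sum_subtractf sum_negf sum_distrib_left mult.assoc)
    also have "\<dots> = c A * b i" using \<gamma>eq i by (simp add: algebra_simps)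
    finally show ?thesis by (simp add: b_def i_def)
  qed
  show ?thesis using tpos \<beta>pos cpos ident by blast
qed



lemma powr_Suc_nat: assumes "0 \<le> (z::real)" shows "z powr real (Suc e) = z ^ Suc e"
proof (cases "z = 0")
  case True then show ?thesis by simp
next
  case False then show ?thesis using assms by (intro powr_realpow) simp
qed

lemma powr_inv_cancel: "0 \<le> (a::real) \<Longrightarrow> 0 < l \<Longrightarrow> (a powr l) powr (1 / l) = a"
  by (cases "a = 0") (simp_all add: powr_powr)

theorem theorem4:
  fixes X :: "'a set" and p :: "'a \<Rightarrow> 'a set \<Rightarrow> real"
  assumes "finite X"
    and "stoch_choice X p"
    and "positive_choice X p"
  shows "unrestricted_cnl X p"
proof (cases "X = {}")
  case True
  show ?thesis unfolding unrestricted_cnl_def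
    by (rule exI[of _ 0]) (simp add: True)
next
  case False
  note finX = assms(1)
  define I where "I = (SIGMA A:{A. A \<subseteq> X \<and> A \<noteq> {}}. A)"
  have memI: "j \<in> I \<longleftrightarrow> fst j \<subseteq> X \<and> fst j \<noteq> {} \<and> snd j \<in> fst j" for j
    by (cases j) (simp add: I_def)
  have finMn: "finite {A. A \<subseteq> X \<and> A \<noteq> {}}"
    by (rule finite_subset[of _ "Pow X"]) (use finX in auto)
  have finI: "finite I" unfolding I_def using finMn finX
    by (intro finite_SigmaI) (auto intro: finite_subset)
  obtain x0 where x0: "x0 \<in> X" using False by auto
  have x0I: "({x0}, x0) \<in> I" using x0 by (simp add: memI)
  have ple: "p x A \<le> 1" and ppos: "0 < p x A" if "A \<subseteq> X" "A \<noteq> {}" "x \<in> A" for A x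
  proof -
    have xX: "x \<in> X" using that by auto
    show "p x A \<le> 1" using assms(2) that xX unfolding stoch_choice_def by blast
    show "0 < p x A" using assms(3) that unfolding positive_choice_def by blast
  qed
  have psum: "(\<Sum>a\<in>A. p a A) = 1" if "A \<subseteq> X" "A \<noteq> {}" for A
    using assms(2) that unfolding stoch_choice_def by auto
  define \<delta> where "\<delta> = Min ((\<lambda>j. p (snd j) (fst j)) ` I)"
  have \<delta>le: "\<delta> \<le> p (snd j) (fst j)" if "j \<in> I" for j
    unfolding \<delta>_def using finI that by simp
  have \<delta>in: "\<delta> \<in> (\<lambda>j. p (snd j) (fst j)) ` I" unfolding \<delta>_def using finI x0I by (intro Min_in) auto
  have \<delta>pos: "0 < \<delta>" using \<delta>in ppos by (auto simp: memI)
  have \<delta>1: "\<delta> \<le> 1" using \<delta>in ple by (auto simp: memI)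
  have pb: "\<delta> \<le> p x A \<and> p x A \<le> 1" if "A \<subseteq> X" "A \<noteq> {}" "x \<in> A" for A x
    using \<delta>le[of "(A, x)"] ple[OF that] that by (simp add: memI)
  obtain t e \<beta> c where tpos: "0 < t" and \<beta>pos: "\<forall>j\<in>I. 0 < \<beta> j" and cpos: "\<forall>A. 0 < c A"
    and ident: "\<forall>A x. A \<subseteq> X \<and> A \<noteq> {} \<and> x \<in> A \<longrightarrow>
            (\<Sum>j\<in>I. \<beta> j * wt t j x * WW t j A ^ e) = c A * p x A"
  proof -
    have "\<exists>t e \<beta> c. 0 < t \<and> (\<forall>j\<in>I. 0 < \<beta> j) \<and> (\<forall>A. 0 < c A)
     \<and> (\<forall>A x. A \<subseteq> X \<and> A \<noteq> {} \<and> x \<in> A \<longrightarrow>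
            (\<Sum>j\<in>I. \<beta> j * wt t j x * WW t j A ^ e) = c A * p x A)"
      unfolding I_def by (rule solve[where X=X and p=p and \<delta>=\<delta>]) (use finX False \<delta>pos \<delta>1 pb in auto)
    then show ?thesis by (elim exE conjE) (rule that; assumption)
  qed
  define K where "K = card I"
  obtain h where h: "bij_betw h {0..<K} I" using ex_bij_betw_nat_finite[OF finI] unfolding K_def by blast
  have hI: "h k \<in> I" if "k < K" for k using h that by (auto simp: bij_betw_def)
  have \<beta>h: "0 < \<beta> (h k)" if "k < K" for k using \<beta>pos hI[OF that] by blast
  define lam where "lam = real (Suc e)"
  have lpos: "0 < lam" by (simp add: lam_def)
  define s where "s k = \<beta> (h k) powr (1 / lam)" for k
  have spos: "0 < s k" if "k < K" for k using \<beta>h[OF that] by (simp add: s_def)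
  have sSuc: "s k ^ Suc e = \<beta> (h k)" if "k < K" for k
  proof -
    have "s k ^ Suc e = s k powr lam" unfolding lam_def by (rule powr_Suc_nat[symmetric]) (use spos[OF that] in simp)
    also have "\<dots> = \<beta> (h k)" using \<beta>h[OF that] lpos by (simp add: s_def powr_powr)
    finally show ?thesis .
  qed
  define a where "a k y = s k * wt t (h k) y" for k y
  define N where "N k = fst (h k)" for k
  define u where "u y = (\<Sum>k<K. a k y powr lam)" for y
  define \<alpha> where "\<alpha> k y = a k y powr lam / u y" for k y
  define lamf where "lamf = (\<lambda>k::nat. lam)"
  have a0: "0 \<le> a k y" if "k < K" for k y using spos[OF that] tpos by (simp add: a_def wt_nonneg)
  have apos: "0 < a k y \<longleftrightarrow> y \<in> N k" if "k < K" for k y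
    using spos[OF that] tpos by (auto simp: a_def wt_def N_def)
  have upos: "0 < u y" if "y \<in> X" for y
  proof -
    have "({y}, y) \<in> h ` {0..<K}" using h that by (simp add: bij_betw_def memI)
    then obtain k0 where k0: "k0 < K" "h k0 = ({y}, y)" by auto
    have "0 < a k0 y" using apos[OF k0(1)] k0 by (simp add: N_def)
    then have "0 < a k0 y powr lam" by simp
    also have "\<dots> \<le> u y" unfolding u_def using k0 by (intro member_le_sum) auto
    finally show ?thesis .
  qed
  have \<alpha>u: "\<alpha> k y * u y = a k y powr lam" if "y \<in> X" for k y
    using upos[OF that] by (simp add: \<alpha>_def)
  show ?thesis
    unfolding unrestricted_cnl_def
  proof (intro exI[of _ K] exI[of _ N] exI[of _ \<alpha>] exI[of _ u] exI[of _ lamf] conjI allI impI ballI)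
    show "N k \<subseteq> X" if "k < K" for k using hI[OF that] by (simp add: memI N_def)
    show "0 \<le> \<alpha> k x" if "k < K" "x \<in> X" for k x using upos[OF that(2)] by (simp add: \<alpha>_def)
    show "(\<alpha> k x = 0) = (x \<notin> N k)" if "k < K" "x \<in> X" for k x
      using upos[OF that(2)] apos[OF that(1), of x] a0[OF that(1), of x] by (auto simp: \<alpha>_def)
    show "(\<Sum>k<K. \<alpha> k x) = 1" if "x \<in> X" for x
      using upos[OF that] by (simp add: \<alpha>_def sum_divide_distrib[symmetric] u_def[symmetric])
    show "0 < u x" if "x \<in> X" for x using upos[OF that] .
    show "0 < lamf k" for k using lpos by (simp add: lamf_def)
    show "lamf k = lamf k'" for k k' by (simp add: lamf_def)
    fix A x assume A: "A \<subseteq> X \<and> A \<noteq> {}" and x: "x \<in> A"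
    have AX: "A \<subseteq> X" "A \<noteq> {}" using A by auto
    have finA: "finite A" using AX finX finite_subset by auto
    have reidx: "(\<Sum>k<K. g (h k)) = (\<Sum>j\<in>I. g j)" for g :: "'a set \<times> 'a \<Rightarrow> real"
      using sum.reindex_bij_betw[OF h, of g] by (simp add: lessThan_atLeast0)
    have wf: "(\<alpha> k y * u y) powr (1 / lamf k) = a k y" if "k < K" "y \<in> A" for k y
      using \<alpha>u[of y k] that AX a0[OF that(1), of y] lpos by (auto simp: lamf_def powr_inv_cancel)
    define S where "S k = s k * WW t (h k) A" for k
    have WWr: "WW t (h k) A = (\<Sum>y\<in>A \<inter> N k. wt t (h k) y)" for k
      using WW_restrict[OF finA, of t "fst (h k)" "snd (h k)"] by (simp add: N_def)
    have Seq: "(\<Sum>y\<in>A \<inter> N k. (\<alpha> k y * u y) powr (1 / lamf k)) = S k" if "k < K" for k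
    proof -
      have "(\<Sum>y\<in>A \<inter> N k. (\<alpha> k y * u y) powr (1 / lamf k)) = (\<Sum>y\<in>A \<inter> N k. a k y)"
        using wf[OF that] by (intro sum.cong) auto
      also have "\<dots> = S k" by (simp add: a_def S_def WWr sum_distrib_left)
      finally show ?thesis .
    qed
    have S0: "0 \<le> S k" if "k < K" for k using spos[OF that] tpos by (simp add: S_def WW_nonneg)
    have SP: "S k powr lamf k = \<beta> (h k) * WW t (h k) A ^ Suc e" if "k < K" for k
      using powr_Suc_nat[OF S0[OF that], of e] sSuc[OF that]
      by (simp add: lamf_def lam_def S_def power_mult_distrib)
    define D where "D = (\<Sum>l\<in>{l. l < K \<and> A \<inter> N l \<noteq> {}}. S l powr lamf l)"
    have gnl: "gnl_prob K N \<alpha> u lamf x A = (\<Sum>k\<in>{k. k < K \<and> x \<in> A \<inter> N k}. (a k x / S k) * (S k powr lamf k / D))"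
      unfolding gnl_prob_def Let_def D_def using Seq wf x by (intro sum.cong) simp_all
    have WWsuc: "WW t j A ^ Suc e = (\<Sum>y\<in>A. wt t j y * WW t j A ^ e)" for j
      by (simp add: sum_distrib_right[symmetric] WW_def[symmetric])
    have Dc: "D = c A"
    proof -
      have "D = (\<Sum>l<K. S l powr lamf l)"
        unfolding D_def
      proof (rule sum.mono_neutral_left)
        show "\<forall>i\<in>{..<K} - {l. l < K \<and> A \<inter> N l \<noteq> {}}. S i powr lamf i = 0"
          by (auto simp: S_def WWr)
      qed auto
      also have "\<dots> = (\<Sum>l<K. \<beta> (h l) * WW t (h l) A ^ Suc e)" using SP by (intro sum.cong) auto
      also have "\<dots> = (\<Sum>j\<in>I. \<beta> j * WW t j A ^ Suc e)" by (rule reidx)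
      also have "\<dots> = (\<Sum>j\<in>I. \<Sum>y\<in>A. \<beta> j * wt t j y * WW t j A ^ e)"
        by (intro sum.cong refl, subst WWsuc) (simp add: sum_distrib_left mult.assoc)
      also have "\<dots> = (\<Sum>y\<in>A. \<Sum>j\<in>I. \<beta> j * wt t j y * WW t j A ^ e)" by (rule sum.swap)
      also have "\<dots> = (\<Sum>y\<in>A. c A * p y A)" using ident AX by (intro sum.cong) auto
      also have "\<dots> = c A" using psum[OF AX] by (simp add: sum_distrib_left[symmetric])
      finally show ?thesis .
    qed
    have tmk: "(a k x / S k) * (S k powr lamf k / D) = \<beta> (h k) * wt t (h k) x * WW t (h k) A ^ e / D"
      if k: "k < K" "x \<in> A \<inter> N k" for k
    proof -
      have "wt t (h k) x \<le> WW t (h k) A" unfolding WW_def using finA k tpos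
        by (intro member_le_sum) (auto simp: wt_nonneg)
      moreover have "1 \<le> wt t (h k) x" using k tpos by (auto simp: wt_def N_def)
      ultimately have "0 < S k" using spos[OF k(1)] by (simp add: S_def)
      then have "(a k x / S k) * (S k powr lamf k) = a k x * S k ^ e"
        using powr_Suc_nat[of "S k" e] by (simp add: lamf_def lam_def field_simps)
      also have "\<dots> = s k ^ Suc e * wt t (h k) x * WW t (h k) A ^ e"
        by (simp add: a_def S_def power_mult_distrib)
      also have "\<dots> = \<beta> (h k) * wt t (h k) x * WW t (h k) A ^ e" using sSuc[OF k(1)] by simp
      finally show ?thesis by (simp add: divide_simps)
    qed
    have "gnl_prob K N \<alpha> u lamf x A = (\<Sum>k\<in>{k. k < K \<and> x \<in> A \<inter> N k}. \<beta> (h k) * wt t (h k) x * WW t (h k) A ^ e / D)"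
      unfolding gnl using tmk by (intro sum.cong) auto
    also have "\<dots> = (\<Sum>k<K. \<beta> (h k) * wt t (h k) x * WW t (h k) A ^ e / D)"
    proof (rule sum.mono_neutral_left)
      show "\<forall>i\<in>{..<K} - {k. k < K \<and> x \<in> A \<inter> N k}. \<beta> (h i) * wt t (h i) x * WW t (h i) A ^ e / D = 0"
        using x by (auto simp: wt_def N_def)
    qed auto
    also have "\<dots> = (\<Sum>j\<in>I. \<beta> j * wt t j x * WW t j A ^ e / D)" by (rule reidx)
    also have "\<dots> = (\<Sum>j\<in>I. \<beta> j * wt t j x * WW t j A ^ e) / D" by (simp add: sum_divide_distrib)
    also have "\<dots> = p x A" using ident AX x Dc cpos[rule_format, of A] by simp
    finally show "p x A = gnl_prob K N \<alpha> u lamf x A" by simp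
  qed
qed


end
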